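(* Let $\Delta$ be an $n$-dimensional simplex in $\mathbb{R}^n$, and let $K \subseteq \Delta$ be a compact convex set. Suppose that $K \cap F = \emptyset$ for every face $F$ of $\Delta$ such that $\dim(F) \leq n-2$. Then (i) for each unit vector $u$, the projection $K_u$ can be translated (within $u^\perp$) into the relative interior of $\Delta_u$; (ii) there exists $\epsilon > 1$ such that, for each unit vector $u$, the projection $\Delta_u$ contains a translate of $\epsilon K_u$ (the same $\epsilon$ for all $u$).
   Context: For a unit vector $u$ and a set $S\subseteq\mathbb{R}^n$, $S_u$ denotes the orthogonal projection of $S$ onto the hyperplane $u^\perp$. *)

theory Defs
  imports "HOL-Analysis.Analysis"
begin

definition proj_perp :: "'a::euclidean_space \<Rightarrow> 'a set \<Rightarrow> 'a set" where
  "proj_perp u S = (\<lambda>x. x - (x \<bullet> u) *\<^sub>R u) ` S"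

end

theory Submission
  imports Defs
begin

lemma sep_exists:
  fixes L U :: "'b \<Rightarrow> real"
  assumes "finite A" "finite B" "\<And>a b. a \<in> A \<Longrightarrow> b \<in> B \<Longrightarrow> L a \<le> U b"
  shows "\<exists>s. (\<forall>a\<in>A. L a \<le> s) \<and> (\<forall>b\<in>B. s \<le> U b)"
proof (cases "A = {}")
  case True
  show ?thesis
  proof (cases "B = {}")
    case True
    then show ?thesis using \<open>A = {}\<close> by auto
  next
    case False
    have "\<forall>b\<in>B. Min (U ` B) \<le> U b" using assms(2) by simp
    then show ?thesis using \<open>A = {}\<close> by blast
  qed
next
  case False
  have "\<forall>a\<in>A. L a \<le> Max (L ` A)" using assms(1) by simp
  moreover have "\<forall>b\<in>B. Max (L ` A) \<le> U b" using False assms by (simp add: Max_le_iff)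
  ultimately show ?thesis by blast
qed

lemma exists_shift:
  fixes w \<mu> :: "'b \<Rightarrow> real"
  assumes fin: "finite V" and w0: "\<forall>v\<in>V. 0 \<le> w v"
    and wd: "\<forall>a\<in>V. \<forall>b\<in>V. a \<noteq> b \<longrightarrow> \<delta> \<le> w a + w b"
    and mb: "\<forall>v\<in>V. \<bar>\<mu> v\<bar> \<le> m" and m: "m > 0"
    and e: "2 * (\<epsilon> - 1) \<le> \<epsilon> * \<delta>" "\<epsilon> \<ge> 0"
  shows "\<exists>s. \<forall>v\<in>V. 0 \<le> \<epsilon> * w v - ((\<epsilon> - 1) / m) * \<bar>\<mu> v\<bar> + s * \<mu> v"
proof -
  define \<sigma> where "\<sigma> = (\<epsilon> - 1) / m"
  define L where "L v = \<sigma> - \<epsilon> * w v / \<mu> v" for v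
  define U where "U v = \<epsilon> * w v / (- \<mu> v) - \<sigma>" for v
  have "\<exists>s. (\<forall>a\<in>{v\<in>V. \<mu> v > 0}. L a \<le> s) \<and> (\<forall>b\<in>{v\<in>V. \<mu> v < 0}. s \<le> U b)"
  proof (rule sep_exists)
    show "finite {v \<in> V. 0 < \<mu> v}" "finite {v \<in> V. \<mu> v < 0}" using fin by auto
    fix a b assume a: "a \<in> {v \<in> V. 0 < \<mu> v}" and b: "b \<in> {v \<in> V. \<mu> v < 0}"
    have ab: "a \<noteq> b" using a b by auto
    have da: "\<epsilon> * w a / m \<le> \<epsilon> * w a / \<mu> a"
      using a mb w0 e by (intro divide_left_mono) auto
    have db: "\<epsilon> * w b / m \<le> \<epsilon> * w b / (- \<mu> b)"
      using b mb w0 e m by (intro divide_left_mono) (auto simp: mult_pos_neg)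
    have "2 * \<sigma> \<le> \<epsilon> * \<delta> / m" unfolding \<sigma>_def using e m by (simp add: divide_right_mono)
    also have "\<dots> \<le> \<epsilon> * (w a + w b) / m"
      using wd a b ab e m by (intro divide_right_mono mult_left_mono) auto
    also have "\<dots> = \<epsilon> * w a / m + \<epsilon> * w b / m" by (simp add: algebra_simps add_divide_distrib)
    finally show "L a \<le> U b" unfolding L_def U_def using da db by linarith
  qed
  then obtain s where sL: "\<forall>a\<in>{v\<in>V. \<mu> v > 0}. L a \<le> s" and sU: "\<forall>b\<in>{v\<in>V. \<mu> v < 0}. s \<le> U b"
    by blast
  show ?thesis
  proof (intro exI ballI)
    fix v assume v: "v \<in> V"
    consider "\<mu> v > 0" | "\<mu> v < 0" | "\<mu> v = 0" by linarith
    then show "0 \<le> \<epsilon> * w v - ((\<epsilon> - 1) / m) * \<bar>\<mu> v\<bar> + s * \<mu> v"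
    proof cases
      case 1
      then have "L v \<le> s" using sL v by auto
      then have "0 \<le> \<mu> v * (s - L v)" using 1 by simp
      also have "\<mu> v * (s - L v) = \<epsilon> * w v - ((\<epsilon> - 1) / m) * \<bar>\<mu> v\<bar> + s * \<mu> v"
        unfolding L_def \<sigma>_def using 1 by (simp add: field_simps)
      finally show ?thesis .
    next
      case 2
      then have "s \<le> U v" using sU v by auto
      then have "0 \<le> (- \<mu> v) * (U v - s)" using 2 by (intro mult_nonneg_nonneg) auto
      also have "(- \<mu> v) * (U v - s) = \<epsilon> * w v - ((\<epsilon> - 1) / m) * \<bar>\<mu> v\<bar> + s * \<mu> v"
        unfolding U_def \<sigma>_def using 2 by (simp add: field_simps add_divide_distrib[symmetric])
      finally show ?thesis .
    next
      case 3
      then show ?thesis using w0 v e by simp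
    qed
  qed
qed

lemma weight_bound:
  fixes V :: "'a::euclidean_space set"
  assumes fin: "finite V" and ab: "a \<in> V" "b \<in> V" "a \<noteq> b"
    and w0: "\<forall>v\<in>V. 0 \<le> w v" and w1: "sum w V = 1"
    and R: "\<forall>v\<in>V. norm v \<le> R" "0 < R" and d: "d > 0"
    and sep: "\<forall>y'\<in>convex hull (V - {a, b}). d \<le> dist (\<Sum>v\<in>V. w v *\<^sub>R v) y'"
  shows "min 1 (d / (2 * R)) \<le> w a + w b"
proof (cases "w a + w b \<ge> 1")
  case True then show ?thesis by linarith
next
  case False
  define \<eta> where "\<eta> = w a + w b"
  define W where "W = V - {a, b}"
  have finW: "finite W" using fin W_def by auto
  have sumV: "sum f V = f a + f b + sum f W" for f :: "'a \<Rightarrow> 'c::comm_monoid_add"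
  proof -
    have "sum f V = f a + sum f (V - {a})" using fin ab by (simp add: sum.remove)
    also have "sum f (V - {a}) = f b + sum f (V - {a} - {b})"
      using fin ab by (intro sum.remove) auto
    moreover have "V - {a} - {b} = W" unfolding W_def by auto
    ultimately show ?thesis by (simp add: add.assoc)
  qed
  have sW: "sum w W = 1 - \<eta>" using sumV[of w] w1 \<eta>_def by simp
  have eta1: "\<eta> < 1" using False \<eta>_def by simp
  have eta0: "0 \<le> \<eta>" using w0 ab \<eta>_def by auto
  define y' where "y' = (\<Sum>v\<in>W. (w v / (1 - \<eta>)) *\<^sub>R v)"
  have y'hull: "y' \<in> convex hull W"
    unfolding convex_hull_finite[OF finW]
  proof (intro CollectI exI conjI ballI)
    show "0 \<le> w x / (1 - \<eta>)" if "x \<in> W" for x using that w0 eta1 W_def by auto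
    show "(\<Sum>v\<in>W. w v / (1 - \<eta>)) = 1" using sW eta1 by (simp add: sum_divide_distrib[symmetric])
    show "(\<Sum>v\<in>W. (w v / (1 - \<eta>)) *\<^sub>R v) = y'" by (simp add: y'_def)
  qed
  have ny': "norm y' \<le> R"
  proof -
    have "norm y' \<le> (\<Sum>v\<in>W. norm ((w v / (1 - \<eta>)) *\<^sub>R v))" unfolding y'_def by (rule norm_sum)
    also have "\<dots> \<le> (\<Sum>v\<in>W. (w v / (1 - \<eta>)) * R)"
      using w0 eta1 R W_def by (intro sum_mono) (auto intro!: mult_left_mono divide_right_mono)
    also have "\<dots> = R" using sW eta1 by (simp add: sum_distrib_right[symmetric] sum_divide_distrib[symmetric])
    finally show ?thesis .
  qed
  have yeq: "(\<Sum>v\<in>V. w v *\<^sub>R v) = w a *\<^sub>R a + w b *\<^sub>R b + (1 - \<eta>) *\<^sub>R y'"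
    using sumV[of "\<lambda>v. w v *\<^sub>R v"] eta1 unfolding y'_def by (simp add: scaleR_sum_right)
  have "d \<le> dist (\<Sum>v\<in>V. w v *\<^sub>R v) y'" using sep y'hull W_def by auto
  also have "\<dots> = norm (w a *\<^sub>R a + w b *\<^sub>R b - \<eta> *\<^sub>R y')"
    unfolding yeq dist_norm by (simp add: algebra_simps)
  also have "\<dots> \<le> norm (w a *\<^sub>R a) + norm (w b *\<^sub>R b) + norm (\<eta> *\<^sub>R y')"
    using norm_triangle_ineq4[of "w a *\<^sub>R a + w b *\<^sub>R b" "\<eta> *\<^sub>R y'"]
      norm_triangle_ineq[of "w a *\<^sub>R a" "w b *\<^sub>R b"] by linarith
  also have "\<dots> \<le> w a * R + w b * R + \<eta> * R"
    using w0 ab R ny' eta0 by (intro add_mono) (auto intro!: mult_left_mono)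
  also have "\<dots> = 2 * R * \<eta>" unfolding \<eta>_def by (simp add: algebra_simps)
  finally have "d / (2 * R) \<le> \<eta>" using R by (simp add: field_simps)
  then show ?thesis unfolding \<eta>_def by linarith
qed



theorem lemma3p1:
  fixes \<Delta> K :: "'a::euclidean_space set"
  assumes simp: "(int DIM('a)) simplex \<Delta>"
    and "compact K" and "convex K" and "K \<subseteq> \<Delta>"
    and faces: "\<And>F. F face_of \<Delta> \<Longrightarrow> aff_dim F \<le> int DIM('a) - 2 \<Longrightarrow> K \<inter> F = {}"
  shows "(\<forall>u. norm u = 1 \<longrightarrow>
            (\<exists>t. t \<bullet> u = 0 \<and>
                 (\<lambda>x. x + t) ` proj_perp u K \<subseteq> rel_interior (proj_perp u \<Delta>)))
       \<and> (\<exists>\<epsilon>>1. \<forall>u. norm u = 1 \<longrightarrow>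
            (\<exists>t. t \<bullet> u = 0 \<and>
                 (\<lambda>x. x + t) ` ((\<lambda>x. \<epsilon> *\<^sub>R x) ` proj_perp u K) \<subseteq> proj_perp u \<Delta>))"
proof -
  obtain V where indV: "\<not> affine_dependent V" and cardV: "int (card V) = int DIM('a) + 1"
    and DV: "\<Delta> = convex hull V"
    using simp unfolding simplex_def by blast
  have finV: "finite V" using indV aff_independent_finite by blast
  have "aff_dim V = int DIM('a)" using aff_dim_affine_independent[OF indV] cardV by linarith
  then have affV: "affine hull V = UNIV" using aff_dim_eq_full by blast
  have Vne: "V \<noteq> {}" using cardV by auto
  define G where "G = (\<Union>a\<in>V. \<Union>b\<in>V - {a}. convex hull (V - {a, b}))"
  have closedG: "closed G" unfolding G_def using finV
    by (intro closed_UN finite_Diff ballI compact_imp_closed compact_convex_hull finite_imp_compact) auto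
  have KG: "K \<inter> G = {}"
  proof -
    have "K \<inter> convex hull (V - {a, b}) = {}" if ab: "a \<in> V" "b \<in> V" "a \<noteq> b" for a b
    proof (rule faces)
      show "convex hull (V - {a, b}) face_of \<Delta>"
        unfolding DV using face_of_convex_hull_affine_independent[OF indV] by blast
      have ind2: "\<not> affine_dependent (V - {a, b})" using indV affine_independent_subset by blast
      have c2: "card (V - {a, b}) = card V - 2" using ab finV by (simp add: card_Diff_subset)
      have "card V \<ge> 2" using ab finV by (metis card_2_iff card_mono empty_subsetI insert_subset)
      then have "int (card (V - {a, b})) = int (card V) - 2" using c2 by simp
      then show "aff_dim (convex hull (V - {a, b})) \<le> int DIM('a) - 2"
        using aff_dim_convex_hull[of "V - {a, b}"] aff_dim_affine_independent[OF ind2] cardV by linarith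
    qed
    then show ?thesis unfolding G_def by blast
  qed
  obtain d where d: "d > 0" and dK: "\<forall>x\<in>K. \<forall>y\<in>G. d \<le> dist x y"
    using separate_compact_closed[OF \<open>compact K\<close> closedG KG] by blast
  obtain R where R: "R > 0" "\<forall>v\<in>V. norm v \<le> R"
    using finite_imp_bounded[OF finV] bounded_pos by blast
  define \<delta> where "\<delta> = min 1 (d / (2 * R))"
  have \<delta>: "0 < \<delta>" "\<delta> \<le> 1" unfolding \<delta>_def using d R by auto
  define \<epsilon> where "\<epsilon> = 2 / (2 - \<delta>)"
  have e1: "\<epsilon> > 1" unfolding \<epsilon>_def using \<delta> by (simp add: field_simps)
  have e2: "2 * (\<epsilon> - 1) \<le> \<epsilon> * \<delta>" unfolding \<epsilon>_def using \<delta> by (simp add: field_simps)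
  have wb: "\<forall>a\<in>V. \<forall>b\<in>V. a \<noteq> b \<longrightarrow> \<delta> \<le> w a + w b"
    if "y \<in> K" "\<forall>v\<in>V. 0 \<le> w v" "sum w V = 1" "(\<Sum>v\<in>V. w v *\<^sub>R v) = y" for y w
  proof (intro ballI impI)
    fix a b assume ab: "a \<in> V" "b \<in> V" "a \<noteq> b"
    show "\<delta> \<le> w a + w b" unfolding \<delta>_def
    proof (rule weight_bound[OF finV ab that(2,3) R(2,1) d])
      show "\<forall>y'\<in>convex hull (V - {a, b}). d \<le> dist (\<Sum>v\<in>V. w v *\<^sub>R v) y'"
        using dK that(1,4) ab unfolding G_def by blast
    qed
  qed
  have ii: "\<forall>u. norm u = 1 \<longrightarrow> (\<exists>t. t \<bullet> u = 0 \<and>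
          (\<lambda>x. x + t) ` ((\<lambda>x. \<epsilon> *\<^sub>R x) ` proj_perp u K) \<subseteq> proj_perp u \<Delta>)"
  proof (intro allI impI)
    fix u :: 'a assume nu: "norm u = 1"
    have uu: "u \<bullet> u = 1" using nu by (simp add: dot_square_norm)
    define p where "p = (\<lambda>x::'a. x - (x \<bullet> u) *\<^sub>R u)"
    have pp: "proj_perp u S = p ` S" for S unfolding proj_perp_def p_def by simp
    have pu: "p x \<bullet> u = 0" for x unfolding p_def using uu by (simp add: inner_diff_left)
    have plin: "p (r *\<^sub>R x + q *\<^sub>R y + s *\<^sub>R u) = r *\<^sub>R p x + q *\<^sub>R p y" for r q s x y
      unfolding p_def using uu by (simp add: inner_add_left algebra_simps)
    obtain v0 where v0: "v0 \<in> V" using Vne by blast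
    obtain \<alpha> where \<alpha>: "sum \<alpha> V = 1" "(\<Sum>v\<in>V. \<alpha> v *\<^sub>R v) = v0 + u"
    proof -
      have "v0 + u \<in> affine hull V" using affV by simp
      then show ?thesis using that unfolding affine_hull_finite[OF finV] by blast
    qed
    define \<mu> where "\<mu> v = \<alpha> v - (if v = v0 then 1 else 0)" for v
    have smu: "sum \<mu> V = 0" unfolding \<mu>_def using \<alpha> v0 finV by (simp add: sum_subtractf)
    have umu: "(\<Sum>v\<in>V. \<mu> v *\<^sub>R v) = u"
    proof -
      have "(\<Sum>v\<in>V. \<mu> v *\<^sub>R v) = (\<Sum>v\<in>V. \<alpha> v *\<^sub>R v) - (\<Sum>v\<in>V. (if v = v0 then v0 else 0))"
      proof -
        have "(\<Sum>v\<in>V. \<mu> v *\<^sub>R v) = (\<Sum>v\<in>V. \<alpha> v *\<^sub>R v - (if v = v0 then v0 else 0))"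
          unfolding \<mu>_def by (intro sum.cong) (auto simp: scaleR_diff_left)
        then show ?thesis by (simp add: sum_subtractf)
      qed
      also have "\<dots> = u" using \<alpha> v0 finV by simp
      finally show ?thesis .
    qed
    define m where "m = (\<Sum>v\<in>V. \<bar>\<mu> v\<bar>)"
    have mub: "\<forall>v\<in>V. \<bar>\<mu> v\<bar> \<le> m" unfolding m_def using finV by (auto intro: member_le_sum)
    have mpos: "m > 0"
    proof (rule ccontr)
      assume "\<not> m > 0"
      then have "\<forall>v\<in>V. \<mu> v = 0" using mub by force
      then have "u = 0" using umu by simp
      then show False using nu by simp
    qed
    define c where "c = (\<Sum>v\<in>V. (\<bar>\<mu> v\<bar> / m) *\<^sub>R v)"
    define \<sigma> where "\<sigma> = (\<epsilon> - 1) / m"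
    show "\<exists>t. t \<bullet> u = 0 \<and> (\<lambda>x. x + t) ` ((\<lambda>x. \<epsilon> *\<^sub>R x) ` proj_perp u K) \<subseteq> proj_perp u \<Delta>"
    proof (intro exI conjI)
      show "((1 - \<epsilon>) *\<^sub>R p c) \<bullet> u = 0" using pu by simp
      show "(\<lambda>x. x + (1 - \<epsilon>) *\<^sub>R p c) ` ((\<lambda>x. \<epsilon> *\<^sub>R x) ` proj_perp u K) \<subseteq> proj_perp u \<Delta>"
      proof (clarsimp simp: pp)
        fix y assume yK: "y \<in> K"
        then have "y \<in> convex hull V" using \<open>K \<subseteq> \<Delta>\<close> DV by blast
        then obtain w where w: "\<forall>v\<in>V. 0 \<le> w v" "sum w V = 1" "(\<Sum>v\<in>V. w v *\<^sub>R v) = y"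
          unfolding convex_hull_finite[OF finV] by blast
        have wd: "\<forall>a\<in>V. \<forall>b\<in>V. a \<noteq> b \<longrightarrow> \<delta> \<le> w a + w b" using wb[OF yK w] .
        obtain s where s: "\<forall>v\<in>V. 0 \<le> \<epsilon> * w v - \<sigma> * \<bar>\<mu> v\<bar> + s * \<mu> v"
          using exists_shift[OF finV w(1) wd mub mpos e2] e1 unfolding \<sigma>_def by auto
        define z where "z = (\<Sum>v\<in>V. (\<epsilon> * w v - \<sigma> * \<bar>\<mu> v\<bar> + s * \<mu> v) *\<^sub>R v)"
        have zD: "z \<in> \<Delta>"
          unfolding DV convex_hull_finite[OF finV]
        proof (intro CollectI exI conjI ballI)
          show "0 \<le> \<epsilon> * w x - \<sigma> * \<bar>\<mu> x\<bar> + s * \<mu> x" if "x \<in> V" for x using s that by blast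
          have "(\<Sum>v\<in>V. \<epsilon> * w v - \<sigma> * \<bar>\<mu> v\<bar> + s * \<mu> v) = \<epsilon> * sum w V - \<sigma> * m + s * sum \<mu> V"
            unfolding m_def by (simp add: sum.distrib sum_subtractf sum_distrib_left)
          then show "(\<Sum>v\<in>V. \<epsilon> * w v - \<sigma> * \<bar>\<mu> v\<bar> + s * \<mu> v) = 1"
            using w(2) smu mpos unfolding \<sigma>_def by simp
        qed (simp add: z_def)
        have zeq: "z = \<epsilon> *\<^sub>R y + (1 - \<epsilon>) *\<^sub>R c + s *\<^sub>R u"
        proof -
          have "z = \<epsilon> *\<^sub>R (\<Sum>v\<in>V. w v *\<^sub>R v) - (\<sigma> * m) *\<^sub>R (\<Sum>v\<in>V. (\<bar>\<mu> v\<bar> / m) *\<^sub>R v)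
                    + s *\<^sub>R (\<Sum>v\<in>V. \<mu> v *\<^sub>R v)"
            unfolding z_def using mpos
            by (simp add: scaleR_add_left scaleR_diff_left sum.distrib sum_subtractf scaleR_sum_right)
          also have "\<dots> = \<epsilon> *\<^sub>R y + (1 - \<epsilon>) *\<^sub>R c + s *\<^sub>R u"
          proof -
            have "\<sigma> * m = \<epsilon> - 1" unfolding \<sigma>_def using mpos by simp
            then show ?thesis using w(3) umu unfolding c_def[symmetric]
              by (simp add: scaleR_diff_left)
          qed
          finally show ?thesis .
        qed
        have "\<epsilon> *\<^sub>R p y + (1 - \<epsilon>) *\<^sub>R p c = p z" unfolding zeq plin ..
        then show "\<epsilon> *\<^sub>R p y + (1 - \<epsilon>) *\<^sub>R p c \<in> p ` \<Delta>" using zD by blast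
      qed
    qed
  qed
  have i: "\<forall>u. norm u = 1 \<longrightarrow> (\<exists>t. t \<bullet> u = 0 \<and>
          (\<lambda>x. x + t) ` proj_perp u K \<subseteq> rel_interior (proj_perp u \<Delta>))"
  proof (intro allI impI)
    fix u :: 'a assume nu: "norm u = 1"
    have uu: "u \<bullet> u = 1" using nu by (simp add: dot_square_norm)
    obtain t where t: "t \<bullet> u = 0"
      and tK: "(\<lambda>x. x + t) ` ((\<lambda>x. \<epsilon> *\<^sub>R x) ` proj_perp u K) \<subseteq> proj_perp u \<Delta>"
      using ii nu by blast
    define P where "P = proj_perp u \<Delta>"
    have lin: "linear (\<lambda>x::'a. x - (x \<bullet> u) *\<^sub>R u)"
      by (intro linearI) (simp_all add: inner_add_left algebra_simps)
    have cP: "convex P" unfolding P_def proj_perp_def DV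
      by (intro convex_linear_image[OF lin] convex_convex_hull)
    have "\<Delta> \<noteq> {}" unfolding DV using Vne hull_subset by fastforce
    then have "P \<noteq> {}" unfolding P_def proj_perp_def by simp
    then obtain q where q: "q \<in> rel_interior P" using rel_interior_eq_empty[OF cP] by blast
    have Pu: "x \<bullet> u = 0" if "x \<in> P" for x
      using that uu unfolding P_def proj_perp_def by (auto simp: inner_diff_left)
    have qu: "q \<bullet> u = 0" using Pu q rel_interior_subset by blast
    define e where "e = 1 - 1 / \<epsilon>"
    have e: "0 < e" "e \<le> 1" unfolding e_def using e1 by (auto simp: field_simps)
    show "\<exists>t. t \<bullet> u = 0 \<and> (\<lambda>x. x + t) ` proj_perp u K \<subseteq> rel_interior (proj_perp u \<Delta>)"
    proof (intro exI conjI)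
      show "(t /\<^sub>R \<epsilon> + e *\<^sub>R q) \<bullet> u = 0" using t qu by (simp add: inner_add_left)
      show "(\<lambda>x. x + (t /\<^sub>R \<epsilon> + e *\<^sub>R q)) ` proj_perp u K \<subseteq> rel_interior (proj_perp u \<Delta>)"
      proof clarify
        fix k assume k: "k \<in> proj_perp u K"
        define x where "x = \<epsilon> *\<^sub>R k + t"
        have xP: "x \<in> P" using tK k unfolding x_def P_def by blast
        have "x - e *\<^sub>R (x - q) \<in> rel_interior P"
          using rel_interior_closure_convex_shrink[OF cP q _ e] xP closure_subset by blast
        moreover have "x - e *\<^sub>R (x - q) = k + (t /\<^sub>R \<epsilon> + e *\<^sub>R q)"
        proof -
          have "x - e *\<^sub>R (x - q) = (1 / \<epsilon>) *\<^sub>R x + e *\<^sub>R q"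
            unfolding e_def by (simp add: algebra_simps)
          also have "\<dots> = k + (t /\<^sub>R \<epsilon> + e *\<^sub>R q)"
            unfolding x_def using e1 by (simp add: scaleR_add_right divide_inverse)
          finally show ?thesis .
        qed
        ultimately show "k + (t /\<^sub>R \<epsilon> + e *\<^sub>R q) \<in> rel_interior (proj_perp u \<Delta>)"
          unfolding P_def by simp
      qed
    qed
  qed
  show ?thesis using i ii e1 by blast
qed
end
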